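(* Let $1\le k<n$ (or $k\le n$), $\mathcal X=\mathbb C^n$, and let $v_1>v_2>\dots>v_k>0$ and $v_{k+1}=0$. Let $\mathcal R$ be the set of $k$-tuples $(x_1,\dots,x_k)$ of orthonormal vectors in $\mathcal X$. Define the quantum score $S=(s,\mu)$ on reports $\mathcal R$ with outcomes $\{1,\dots,k+1\}$ by $\mu((x_1,\dots,x_k))=\{x_1x_1^*,\dots,x_kx_k^*,\,I-\sum_{i=1}^kx_ix_i^*\}$ and $s((x_1,\dots,x_k),y)=v_y$. Then for every $\rho\in\mathrm{Dens}(\mathcal X)$, $S((x_1,\dots,x_k);\rho)=\langle\sum_{i=1}^kv_ix_ix_i^*,\rho\rangle$, and the set of maximizers $\arg\max_{r\in\mathcal R}S(r;\rho)$ equals the set of orthonormal tuples $(x_1,\dots,x_k)$ such that $\rho x_i=\lambda_i(\rho)x_i$ for each $i=1,\dots,k$. In particular, $S$ elicits the set-valued property $\Gamma_{1..k}$.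
   Context: $\langle X,Y\rangle=\mathrm{Tr}(X^*Y)$; $\mathrm{Dens}(\mathcal X)$ the density matrices; $\lambda_i(\rho)$ the $i$-th largest eigenvalue of $\rho$. For a quantum score on a report set $\mathcal R$, $S=(s,\mu)$ with $\mu(r)$ a measurement (positive semidefinite operators summing to $I$) and expected score $S(r;\rho)=\sum_y\langle\mu(r)_y,\rho\rangle s(r,y)$. A set-valued property $\Gamma:\mathrm{Dens}(\mathcal X)\to 2^{\mathcal R}$ is elicited by $S$ if $\Gamma(\rho)=\arg\max_{r\in\mathcal R}S(r;\rho)$ for every $\rho$. $\Gamma_{1..k}(\rho)$ is the set of orthonormal $k$-tuples $(x_1,\dots,x_k)$ where $x_i$ is an eigenvector of $\rho$ with eigenvalue $\lambda_i(\rho)$. *)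

theory Defs
  imports "Jordan_Normal_Form.Schur_Decomposition" "HOL-Library.Multiset"
begin

definition mtrace :: "complex mat \<Rightarrow> complex" where
  "mtrace A = (\<Sum>i<dim_row A. A $$ (i, i))"

definition hs_inner :: "complex mat \<Rightarrow> complex mat \<Rightarrow> complex" where
  "hs_inner X Y = mtrace (mat_adjoint X * Y)"

definition density :: "nat \<Rightarrow> complex mat \<Rightarrow> bool" where
  "density n \<rho> \<longleftrightarrow> \<rho> \<in> carrier_mat n n \<and> mat_adjoint \<rho> = \<rho>
     \<and> (\<forall>w \<in> carrier_vec n. 0 \<le> Re (conjugate w \<bullet> (\<rho> *\<^sub>v w))) \<and> mtrace \<rho> = 1"

text \<open>Eigenvalues of rho (with multiplicity: the roots of the characteristic polynomial),
  sorted in decreasing order; eig_desc rho i is the i-th largest (i starting at 1).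
  For Hermitian rho all these roots are real, so taking real parts loses nothing.\<close>
definition eig_desc :: "complex mat \<Rightarrow> nat \<Rightarrow> real" where
  "eig_desc \<rho> i = rev (sorted_list_of_multiset (image_mset Re (proots (char_poly \<rho>)))) ! (i - 1)"

definition outer :: "nat \<Rightarrow> complex vec \<Rightarrow> complex mat" where
  "outer n x = mat n n (\<lambda>(a, b). x $ a * cnj (x $ b))"

text \<open>Orthonormal k-tuples in C^n, represented as lists of length k (entry i-1 is x_i).\<close>
definition orthonormal_tuples :: "nat \<Rightarrow> nat \<Rightarrow> complex vec list set" where
  "orthonormal_tuples n k = {xs. length xs = k \<and> set xs \<subseteq> carrier_vec n \<and>
      (\<forall>i<k. \<forall>j<k. xs ! i \<bullet>c xs ! j = (if i = j then 1 else 0))}"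

definition qscore_exp :: "'y set \<Rightarrow> ('r \<Rightarrow> 'y \<Rightarrow> real) \<Rightarrow> ('r \<Rightarrow> 'y \<Rightarrow> complex mat)
     \<Rightarrow> 'r \<Rightarrow> complex mat \<Rightarrow> complex" where
  "qscore_exp Y s \<mu> r \<rho> = (\<Sum>y\<in>Y. hs_inner (\<mu> r y) \<rho> * complex_of_real (s r y))"

definition qargmax :: "'r set \<Rightarrow> 'y set \<Rightarrow> ('r \<Rightarrow> 'y \<Rightarrow> real) \<Rightarrow> ('r \<Rightarrow> 'y \<Rightarrow> complex mat)
     \<Rightarrow> complex mat \<Rightarrow> 'r set" where
  "qargmax R Y s \<mu> \<rho> = {r \<in> R. \<forall>r' \<in> R. Re (qscore_exp Y s \<mu> r' \<rho>) \<le> Re (qscore_exp Y s \<mu> r \<rho>)}"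

definition elicits :: "nat \<Rightarrow> 'r set \<Rightarrow> 'y set \<Rightarrow> ('r \<Rightarrow> 'y \<Rightarrow> real) \<Rightarrow> ('r \<Rightarrow> 'y \<Rightarrow> complex mat)
     \<Rightarrow> (complex mat \<Rightarrow> 'r set) \<Rightarrow> bool" where
  "elicits n R Y s \<mu> \<Gamma> \<longleftrightarrow> (\<forall>\<rho>. density n \<rho> \<longrightarrow> \<Gamma> \<rho> = qargmax R Y s \<mu> \<rho>)"

definition Gamma_top :: "nat \<Rightarrow> nat \<Rightarrow> complex mat \<Rightarrow> complex vec list set" where
  "Gamma_top n k \<rho> = {xs \<in> orthonormal_tuples n k.
      \<forall>i<k. \<rho> *\<^sub>v (xs ! i) = complex_of_real (eig_desc \<rho> (Suc i)) \<cdot>\<^sub>v (xs ! i)}"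

definition top_mu :: "nat \<Rightarrow> nat \<Rightarrow> complex vec list \<Rightarrow> nat \<Rightarrow> complex mat" where
  "top_mu n k xs y = (if y \<le> k then outer n (xs ! (y - 1))
       else 1\<^sub>m n - mat n n (\<lambda>(a, b). \<Sum>i<k. (xs ! i) $ a * cnj ((xs ! i) $ b)))"

definition weighted_outer :: "nat \<Rightarrow> nat \<Rightarrow> (nat \<Rightarrow> real) \<Rightarrow> complex vec list \<Rightarrow> complex mat" where
  "weighted_outer n k v xs = mat n n (\<lambda>(a, b).
       \<Sum>i<k. complex_of_real (v (Suc i)) * ((xs ! i) $ a * cnj ((xs ! i) $ b)))"

end

theory Submission
  imports Defs
begin


lemma adj_eq: "mat_adjoint (A::complex mat) = mat (dim_col A) (dim_row A) (\<lambda>(i,j). cnj (A $$ (j,i)))"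
  by (rule eq_matI, auto simp: mat_adjoint_def mat_of_rows_def)

lemma adj_index[simp]: "i < dim_col A \<Longrightarrow> j < dim_row A \<Longrightarrow> mat_adjoint (A::complex mat) $$ (i,j) = cnj (A $$ (j,i))"
  "dim_row (mat_adjoint A) = dim_col A" "dim_col (mat_adjoint A) = dim_row A"
  by (auto simp: adj_eq)

lemma adj_carrier[simp]: "A \<in> carrier_mat nr nc \<Longrightarrow> mat_adjoint (A::complex mat) \<in> carrier_mat nc nr"
  unfolding carrier_mat_def by simp

lemma adj_adj[simp]: "mat_adjoint (mat_adjoint (A::complex mat)) = A"
  by (rule eq_matI) simp_all

lemma adj_mult: assumes "A \<in> carrier_mat nr n" "B \<in> carrier_mat n nc"
  shows "mat_adjoint (A * B) = mat_adjoint B * mat_adjoint (A::complex mat)"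
proof (rule eq_matI)
  fix i j assume "i < dim_row (mat_adjoint B * mat_adjoint A)" "j < dim_col (mat_adjoint B * mat_adjoint A)"
  then have i: "i < nc" and j: "j < nr" using assms by auto
  show "mat_adjoint (A * B) $$ (i, j) = (mat_adjoint B * mat_adjoint A) $$ (i, j)"
    using assms i j by (simp add: scalar_prod_def cnj_sum mult.commute)
qed (use assms in auto)

lemma adj_one[simp]: "mat_adjoint (1\<^sub>m n :: complex mat) = 1\<^sub>m n"
  by (rule eq_matI) simp_all

lemma adj_zero[simp]: "mat_adjoint (0\<^sub>m n m :: complex mat) = 0\<^sub>m m n"
  by (rule eq_matI) simp_all

lemma adj_four_block: assumes "A \<in> carrier_mat n1 m1" "B \<in> carrier_mat n1 m2" "C \<in> carrier_mat n2 m1" "D \<in> carrier_mat n2 m2"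
  shows "mat_adjoint (four_block_mat A B C D :: complex mat) = four_block_mat (mat_adjoint A) (mat_adjoint C) (mat_adjoint B) (mat_adjoint D)"
proof (rule eq_matI)
  fix i j assume "i < dim_row (four_block_mat (mat_adjoint A) (mat_adjoint C) (mat_adjoint B) (mat_adjoint D))"
    "j < dim_col (four_block_mat (mat_adjoint A) (mat_adjoint C) (mat_adjoint B) (mat_adjoint D))"
  then have i: "i < m1 + m2" and j: "j < n1 + n2" using assms by simp_all
  show "mat_adjoint (four_block_mat A B C D) $$ (i, j) = four_block_mat (mat_adjoint A) (mat_adjoint C) (mat_adjoint B) (mat_adjoint D) $$ (i, j)"
    using assms i j by simp
qed (use assms in simp_all)

lemma mult_index3: assumes "X \<in> carrier_mat nr n1" "Y \<in> carrier_mat n1 n2" "Z \<in> carrier_mat n2 nc" "i < nr" "j < nc"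
  shows "(X * Y * Z) $$ (i,j) = (\<Sum>a<n1. \<Sum>b<n2. X $$ (i,a) * Y $$ (a,b) * Z $$ (b,j))"
proof -
  have "(X * Y * Z) $$ (i,j) = (\<Sum>a<n1. X $$ (i,a) * (\<Sum>b<n2. Y $$ (a,b) * Z $$ (b,j)))"
    using assms by (simp add: scalar_prod_def atLeast0LessThan)
  also have "\<dots> = (\<Sum>a<n1. \<Sum>b<n2. X $$ (i,a) * Y $$ (a,b) * Z $$ (b,j))"
    by (simp add: sum_distrib_left mult.assoc)
  finally show ?thesis .
qed

lemma mult_index2: assumes "X \<in> carrier_mat nr n1" "Y \<in> carrier_mat n1 nc" "i < nr" "j < nc"
  shows "(X * Y) $$ (i,j) = (\<Sum>a<n1. X $$ (i,a) * Y $$ (a,j))"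
  using assms by (simp add: scalar_prod_def atLeast0LessThan)




lemma cscalar_self: "(w::complex vec) \<bullet>c w = of_real (\<Sum>i<dim_vec w. (cmod (w$i))^2)"
  by (simp add: scalar_prod_def atLeast0LessThan complex_norm_square del: of_real_power)

lemma cscalar_self_pos: assumes "(w::complex vec) \<bullet>c w \<noteq> 0"
  shows "0 < Re (w \<bullet>c w)" "w \<bullet>c w = of_real (Re (w \<bullet>c w))"
proof -
  define S where "S = (\<Sum>i<dim_vec w. (cmod (w$i))^2)"
  have eq: "w \<bullet>c w = of_real S" unfolding S_def by (rule cscalar_self)
  have "0 \<le> S" unfolding S_def by (intro sum_nonneg) auto
  moreover have "S \<noteq> 0" using assms eq by auto
  ultimately show "0 < Re (w \<bullet>c w)" using eq by simp
  show "w \<bullet>c w = of_real (Re (w \<bullet>c w))" using eq by simp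
qed

lemma normalize_vec: assumes w: "(w::complex vec) \<in> carrier_vec N" and nz: "w \<bullet>c w \<noteq> 0"
  defines "c \<equiv> 1 / sqrt (Re (w \<bullet>c w))"
  shows "(complex_of_real c \<cdot>\<^sub>v w) \<bullet>c (complex_of_real c \<cdot>\<^sub>v w) = 1"
proof -
  have pos: "0 < Re (w \<bullet>c w)" and eq: "w \<bullet>c w = of_real (Re (w \<bullet>c w))" using cscalar_self_pos[OF nz] by auto
  have "(complex_of_real c \<cdot>\<^sub>v w) \<bullet>c (complex_of_real c \<cdot>\<^sub>v w) = of_real c * of_real c * (w \<bullet>c w)"
    using w by (simp add: scalar_prod_def sum_distrib_left ac_simps)
  also have "\<dots> = of_real (c * c * Re (w \<bullet>c w))" by (subst eq) simp
  also have "c * c * Re (w \<bullet>c w) = 1" using pos unfolding c_def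
    by (simp add: field_simps)
  finally show ?thesis by simp
qed

lemma assoc5: assumes "P \<in> carrier_mat n n" "Q \<in> carrier_mat n n" "R \<in> carrier_mat n n" "S \<in> carrier_mat n n" "T \<in> carrier_mat n n"
  shows "P * Q * R * (S * T) = P * (Q * R * S) * (T::'a::comm_ring_1 mat)"
  using assms by (simp add: assoc_mult_mat[of _ n n _ n _ n])

lemma assoc4: assumes "P \<in> carrier_mat n n" "Q \<in> carrier_mat n n" "S \<in> carrier_mat n n" "T \<in> carrier_mat n n"
  shows "P * Q * (S * T) = P * (Q * S) * (T::'a::comm_ring_1 mat)"
  using assms by (simp add: assoc_mult_mat[of _ n n _ n _ n])

lemma assoc_l4: assumes "P \<in> carrier_mat n n" "Q \<in> carrier_mat n n" "R \<in> carrier_mat n n" "S \<in> carrier_mat n n"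
  shows "P * (Q * R * S) = P * Q * R * (S::'a::comm_ring_1 mat)"
  using assms by (simp add: assoc_mult_mat[of _ n n _ n _ n])

lemma spectral_hermitian:
  fixes A :: "complex mat"
  assumes "A \<in> carrier_mat n n" "mat_adjoint A = A"
  shows "\<exists>U. U \<in> carrier_mat n n \<and> mat_adjoint U * U = 1\<^sub>m n \<and> diagonal_mat (mat_adjoint U * A * U)"
  using assms
proof (induction n arbitrary: A)
  case 0
  then show ?case by (intro exI[of _ "1\<^sub>m 0"]) (auto simp: diagonal_mat_def)
next
  case (Suc m A)
  define N where "N = Suc m"
  have A: "A \<in> carrier_mat N N" and herm: "mat_adjoint A = A" using Suc.prems N_def by auto
  have "degree (char_poly A) = N" using degree_monic_char_poly[OF A] by simp
  then have "\<not> constant (poly (char_poly A))" by (simp add: constant_degree N_def)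
  then obtain e where "poly (char_poly A) e = 0" using fundamental_theorem_of_algebra by blast
  then have "eigenvalue A e" using eigenvalue_root_char_poly[OF A] by simp
  then obtain v where v: "v \<in> carrier_vec N" and v0: "v \<noteq> 0\<^sub>v N" and ev: "A *\<^sub>v v = e \<cdot>\<^sub>v v"
    unfolding eigenvalue_def eigenvector_def using A by auto
  have vnz: "v \<bullet>c v \<noteq> 0"
    using v v0 by (metis carrier_vecD conjugate_square_eq_0_vec)
  define c where "c = 1 / sqrt (Re (v \<bullet>c v))"
  define v1 where "v1 = complex_of_real c \<cdot>\<^sub>v v"
  have v1: "v1 \<in> carrier_vec N" using v by (simp add: v1_def)
  have v1n: "v1 \<bullet>c v1 = 1" unfolding v1_def c_def by (rule normalize_vec[OF v vnz])
  have v10: "v1 \<noteq> 0\<^sub>v N" using v1n v1 by auto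
  have ev1: "A *\<^sub>v v1 = e \<cdot>\<^sub>v v1" unfolding v1_def using mult_mat_vec[OF A v] ev
    by (simp add: smult_smult_assoc mult.commute)
  interpret cof_vec_space N "TYPE(complex)" .
  define bs where "bs = basis_completion v1"
  note bc = basis_completion[OF v1 v10, folded bs_def]
  define ws where "ws = gram_schmidt N bs"
  note gs = gram_schmidt_result[OF bc(2) bc(4) bc(5) ws_def]
  have lenws: "length ws = N" using gs bc by simp
  have ws0: "ws ! 0 = v1"
  proof -
    obtain vs where "bs = v1 # vs" unfolding bs_def basis_completion_def Let_def by simp
    then have "hd ws = v1" unfolding ws_def using gram_schmidt_hd[OF v1] by simp
    then show ?thesis using lenws by (cases ws) (auto simp: N_def)
  qed
  have wsc: "\<And>i. i < N \<Longrightarrow> ws ! i \<in> carrier_vec N" using gs(3) lenws by auto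
  have wsnz: "\<And>i. i < N \<Longrightarrow> ws ! i \<bullet>c ws ! i \<noteq> 0" using gs(2) lenws by (auto simp: corthogonal_def)
  have wsorth: "\<And>i j. i < N \<Longrightarrow> j < N \<Longrightarrow> i \<noteq> j \<Longrightarrow> ws ! i \<bullet>c ws ! j = 0"
    using gs(2) lenws by (auto simp: corthogonal_def)
  define cs where "cs i = 1 / sqrt (Re (ws ! i \<bullet>c ws ! i))" for i
  define W where "W = mat N N (\<lambda>(a,i). complex_of_real (cs i) * (ws ! i) $ a)"
  have W: "W \<in> carrier_mat N N" unfolding W_def by simp
  have W0: "\<And>a. a < N \<Longrightarrow> W $$ (a, 0) = v1 $ a"
    unfolding W_def cs_def using ws0 v1n by (simp add: N_def)
  have WW: "mat_adjoint W * W = 1\<^sub>m N"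
  proof (rule eq_matI)
    fix i j assume "i < dim_row (1\<^sub>m N)" "j < dim_col (1\<^sub>m N)"
    then have i: "i < N" and j: "j < N" by auto
    have "(mat_adjoint W * W) $$ (i,j) = (\<Sum>a<N. cnj (W $$ (a,i)) * W $$ (a,j))"
      using mult_index2[of "mat_adjoint W" N N W N i j] W i j by simp
    also have "\<dots> = of_real (cs i) * of_real (cs j) * (ws ! j \<bullet>c ws ! i)"
      using wsc[OF i] wsc[OF j] i j unfolding W_def
      by (simp add: scalar_prod_def atLeast0LessThan sum_distrib_left ac_simps)
    also have "\<dots> = 1\<^sub>m N $$ (i,j)"
    proof (cases "i = j")
      case True
      have "of_real (cs i) * of_real (cs i) * (ws ! i \<bullet>c ws ! i) = (complex_of_real (cs i) \<cdot>\<^sub>v ws ! i) \<bullet>c (complex_of_real (cs i) \<cdot>\<^sub>v ws ! i)"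
        using wsc[OF i] by (simp add: scalar_prod_def sum_distrib_left ac_simps)
      also have "\<dots> = 1" unfolding cs_def by (rule normalize_vec[OF wsc[OF i] wsnz[OF i]])
      finally show ?thesis using True i by simp
    next
      case False
      then show ?thesis using wsorth[OF j i] i j by simp
    qed
    finally show "(mat_adjoint W * W) $$ (i,j) = 1\<^sub>m N $$ (i,j)" .
  qed (use W in auto)
  define A' where "A' = mat_adjoint W * A * W"
  have A': "A' \<in> carrier_mat N N" unfolding A'_def using W A by auto
  have AW0: "\<And>b. b < N \<Longrightarrow> (\<Sum>c<N. A $$ (b,c) * W $$ (c,0)) = e * W $$ (b,0)"
  proof -
    fix b assume b: "b < N"
    have "(\<Sum>c<N. A $$ (b,c) * W $$ (c,0)) = (A *\<^sub>v v1) $ b"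
      using A b v1 W0 by (simp add: scalar_prod_def atLeast0LessThan)
    also have "\<dots> = e * W $$ (b,0)" using ev1 b v1 W0 by simp
    finally show "(\<Sum>c<N. A $$ (b,c) * W $$ (c,0)) = e * W $$ (b,0)" .
  qed
  have A'col: "\<And>i. i < N \<Longrightarrow> A' $$ (i,0) = (if i = 0 then e else 0)"
  proof -
    fix i assume i: "i < N"
    have "A' $$ (i,0) = (\<Sum>a<N. \<Sum>b<N. mat_adjoint W $$ (i,a) * A $$ (a,b) * W $$ (b,0))"
      unfolding A'_def by (rule mult_index3[OF _ A W]) (use W i in \<open>auto simp: N_def\<close>)
    also have "\<dots> = (\<Sum>a<N. mat_adjoint W $$ (i,a) * (\<Sum>b<N. A $$ (a,b) * W $$ (b,0)))"
      by (simp add: sum_distrib_left mult.assoc)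
    also have "\<dots> = e * (\<Sum>a<N. mat_adjoint W $$ (i,a) * W $$ (a,0))"
      by (simp add: AW0 sum_distrib_left ac_simps)
    also have "(\<Sum>a<N. mat_adjoint W $$ (i,a) * W $$ (a,0)) = (mat_adjoint W * W) $$ (i,0)"
      using mult_index2[of "mat_adjoint W" N N W N i 0] W i by (simp add: N_def)
    finally show "A' $$ (i,0) = (if i = 0 then e else 0)" using WW i by (simp add: N_def)
  qed
  have A'herm: "mat_adjoint A' = A'"
  proof -
    have WA: "mat_adjoint W * A \<in> carrier_mat N N" using mult_carrier_mat[OF adj_carrier[OF W] A] .
    have "mat_adjoint A' = mat_adjoint W * mat_adjoint (mat_adjoint W * A)"
      unfolding A'_def by (rule adj_mult[OF WA W])
    also have "mat_adjoint (mat_adjoint W * A) = mat_adjoint A * W"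
      using adj_mult[OF adj_carrier[OF W] A] by simp
    also have "mat_adjoint W * (mat_adjoint A * W) = A'"
      unfolding A'_def herm using assoc_mult_mat[OF adj_carrier[OF W] A W] by simp
    finally show ?thesis .
  qed
  have A'ent: "\<And>i j. i < N \<Longrightarrow> j < N \<Longrightarrow> A' $$ (i,j) = cnj (A' $$ (j,i))"
    using A' by (metis A'herm adj_index carrier_matD)
  have A'row: "\<And>j. j < N \<Longrightarrow> 0 < j \<Longrightarrow> A' $$ (0,j) = 0"
  proof -
    fix j assume j: "j < N" "0 < j"
    have "A' $$ (0,j) = cnj (A' $$ (j,0))" using A'ent[of 0 j] j by (simp add: N_def)
    then show "A' $$ (0,j) = 0" using A'col[of j] j by simp
  qed
  define A3 where "A3 = mat m m (\<lambda>(i,j). A' $$ (Suc i, Suc j))"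
  define A1 where "A1 = mat 1 1 (\<lambda>_. A' $$ (0,0))"
  have A3: "A3 \<in> carrier_mat m m" unfolding A3_def by simp
  have A1: "A1 \<in> carrier_mat 1 1" unfolding A1_def by simp
  have A3herm: "mat_adjoint A3 = A3"
  proof (rule eq_matI)
    fix i j assume "i < dim_row A3" "j < dim_col A3"
    then have i: "i < m" and j: "j < m" using A3 by auto
    have "mat_adjoint A3 $$ (i,j) = cnj (A' $$ (Suc j, Suc i))" using i j by (simp add: A3_def)
    also have "\<dots> = A' $$ (Suc i, Suc j)" using A'ent[of "Suc i" "Suc j"] i j by (simp add: N_def)
    finally show "mat_adjoint A3 $$ (i,j) = A3 $$ (i,j)" using i j by (simp add: A3_def)
  qed (use A3 in simp_all)
  have A'block: "A' = four_block_mat A1 (0\<^sub>m 1 m) (0\<^sub>m m 1) A3"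
  proof (rule eq_matI)
    fix i j assume "i < dim_row (four_block_mat A1 (0\<^sub>m 1 m) (0\<^sub>m m 1) A3)"
      "j < dim_col (four_block_mat A1 (0\<^sub>m 1 m) (0\<^sub>m m 1) A3)"
    then have i: "i < Suc m" and j: "j < Suc m" using A1 A3 by auto
    show "A' $$ (i,j) = four_block_mat A1 (0\<^sub>m 1 m) (0\<^sub>m m 1) A3 $$ (i,j)"
      using i j A'col A'row A1 A3 by (cases i; cases j) (auto simp: A1_def A3_def N_def)
  qed (use A' A1 A3 N_def in auto)
  obtain U3 where U3: "U3 \<in> carrier_mat m m" and U3u: "mat_adjoint U3 * U3 = 1\<^sub>m m"
    and U3d: "diagonal_mat (mat_adjoint U3 * A3 * U3)"
    using Suc.IH[OF A3 A3herm] by blast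
  define V where "V = four_block_mat (1\<^sub>m 1) (0\<^sub>m 1 m) (0\<^sub>m m 1) U3"
  have V: "V \<in> carrier_mat N N" unfolding V_def N_def using U3 by auto
  have Vadj: "mat_adjoint V = four_block_mat (1\<^sub>m 1) (0\<^sub>m 1 m) (0\<^sub>m m 1) (mat_adjoint U3)"
    unfolding V_def using U3 by (subst adj_four_block) auto
  have VV: "mat_adjoint V * V = 1\<^sub>m N"
    unfolding Vadj unfolding V_def N_def using U3 U3u
    by (subst mult_four_block_mat[of _ 1 1 _ m _ m _ _ 1 _ m]) (simp_all add: U3u)
  define U where "U = W * V"
  have U: "U \<in> carrier_mat N N" unfolding U_def using W V by auto
  have Uadj: "mat_adjoint U = mat_adjoint V * mat_adjoint W"
    unfolding U_def by (rule adj_mult[OF W V])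
  have UU: "mat_adjoint U * U = 1\<^sub>m N"
  proof -
    have "mat_adjoint U * U = mat_adjoint V * (mat_adjoint W * W) * V"
      unfolding Uadj unfolding U_def using W V by (intro assoc4) auto
    also have "\<dots> = 1\<^sub>m N" using WW VV V by simp
    finally show ?thesis .
  qed
  have UAU: "mat_adjoint U * A * U = mat_adjoint V * A' * V"
    unfolding Uadj unfolding U_def A'_def using W V A by (intro assoc5) auto
  also have "\<dots> = four_block_mat A1 (0\<^sub>m 1 m) (0\<^sub>m m 1) (mat_adjoint U3 * A3 * U3)"
    unfolding A'block Vadj unfolding V_def using U3 A1 A3 mult_carrier_mat[OF adj_carrier[OF U3] A3]
    by (subst mult_four_block_mat[of _ 1 1 _ m _ m _ _ 1 _ m], simp_all,
        subst mult_four_block_mat[of _ 1 1 _ m _ m _ _ 1 _ m], simp_all add: left_add_zero_mat[of _ m m])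
  finally have D: "mat_adjoint U * A * U = four_block_mat A1 (0\<^sub>m 1 m) (0\<^sub>m m 1) (mat_adjoint U3 * A3 * U3)" .
  have "diagonal_mat (mat_adjoint U * A * U)"
    unfolding D diagonal_mat_def
  proof (intro allI impI)
    fix i j assume i: "i < dim_row (four_block_mat A1 (0\<^sub>m 1 m) (0\<^sub>m m 1) (mat_adjoint U3 * A3 * U3))"
      and j: "j < dim_col (four_block_mat A1 (0\<^sub>m 1 m) (0\<^sub>m m 1) (mat_adjoint U3 * A3 * U3))" and ij: "i \<noteq> j"
    have i': "i < 1 + m" and j': "j < 1 + m" using i j A1 U3 A3 by auto
    show "four_block_mat A1 (0\<^sub>m 1 m) (0\<^sub>m m 1) (mat_adjoint U3 * A3 * U3) $$ (i, j) = 0"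
      using i' j' ij A1 U3 A3 U3d unfolding diagonal_mat_def by (cases i; cases j) auto
  qed
  then show ?case using U UU N_def by blast
qed

lemma proots_linear_list: "proots (\<Prod>a\<leftarrow>xs. [:- a, 1:]) = mset (xs :: complex list)"
proof (induction xs)
  case (Cons a xs)
  have nz: "(\<Prod>a\<leftarrow>xs. [:- a, 1:]) \<noteq> (0 :: complex poly)"
    by (auto simp: prod_list_zero_iff)
  have "proots (\<Prod>a\<leftarrow>a # xs. [:- a, 1:]) = proots [:- a, 1:] + proots (\<Prod>a\<leftarrow>xs. [:- a, 1:])"
    unfolding list.map prod_list.Cons by (rule proots_mult) (use nz in auto)
  also have "proots [:- a, 1:] = {#a#}" using proots_linear_factor[of "- a"] by simp
  finally show ?case using Cons by simp
qed simp

lemma eig_basis: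
  assumes dens: "density n \<rho>"
  shows "\<exists>E :: nat \<Rightarrow> nat \<Rightarrow> complex.
    (\<forall>m<n. \<forall>m'<n. (\<Sum>a<n. cnj (E a m) * E a m') = (if m = m' then 1 else 0)) \<and>
    (\<forall>a<n. \<forall>b<n. (\<Sum>m<n. E a m * cnj (E b m)) = (if a = b then 1 else 0)) \<and>
    (\<forall>a<n. \<forall>m<n. (\<Sum>b<n. \<rho> $$ (a,b) * E b m) = complex_of_real (eig_desc \<rho> (Suc m)) * E a m) \<and>
    (\<forall>i j. i \<le> j \<longrightarrow> j < n \<longrightarrow> eig_desc \<rho> (Suc j) \<le> eig_desc \<rho> (Suc i))"
proof -
  have rho: "\<rho> \<in> carrier_mat n n" and herm: "mat_adjoint \<rho> = \<rho>" using dens by (auto simp: density_def)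
  obtain U where U: "U \<in> carrier_mat n n" and UU: "mat_adjoint U * U = 1\<^sub>m n"
    and Dd: "diagonal_mat (mat_adjoint U * \<rho> * U)"
    using spectral_hermitian[OF rho herm] by blast
  have aU: "mat_adjoint U \<in> carrier_mat n n" using U by simp
  have UU': "U * mat_adjoint U = 1\<^sub>m n" by (rule mat_mult_left_right_inverse[OF aU U UU])
  define D where "D = mat_adjoint U * \<rho> * U"
  have D: "D \<in> carrier_mat n n" unfolding D_def using mult_carrier_mat[OF mult_carrier_mat[OF aU rho] U] .
  have Dd': "\<And>i j. i < n \<Longrightarrow> j < n \<Longrightarrow> i \<noteq> j \<Longrightarrow> D $$ (i,j) = 0"
    using Dd D unfolding D_def diagonal_mat_def by auto
  have Dherm: "mat_adjoint D = D"
  proof -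
    have aUr: "mat_adjoint U * \<rho> \<in> carrier_mat n n" using mult_carrier_mat[OF aU rho] .
    have "mat_adjoint D = mat_adjoint U * mat_adjoint (mat_adjoint U * \<rho>)"
      unfolding D_def by (rule adj_mult[OF aUr U])
    also have "mat_adjoint (mat_adjoint U * \<rho>) = \<rho> * U"
      using adj_mult[OF aU rho] herm by simp
    also have "mat_adjoint U * (\<rho> * U) = D"
      unfolding D_def using assoc_mult_mat[OF aU rho U] by simp
    finally show ?thesis .
  qed
  define \<mu> where "\<mu> i = Re (D $$ (i,i))" for i
  have Dreal: "\<And>i. i < n \<Longrightarrow> D $$ (i,i) = complex_of_real (\<mu> i)"
  proof -
    fix i assume i: "i < n"
    have "D $$ (i,i) = cnj (D $$ (i,i))" using adj_index(1)[of i D i] D i Dherm by simp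
    then show "D $$ (i,i) = complex_of_real (\<mu> i)" unfolding \<mu>_def
      by (metis Reals_cnj_iff complex_is_Real_iff of_real_Re)
  qed
  have rhoU: "\<rho> * U = U * D"
  proof -
    have "U * D = U * (mat_adjoint U * \<rho> * U)" unfolding D_def ..
    also have "\<dots> = U * mat_adjoint U * \<rho> * U" by (rule assoc_l4[OF U aU rho U])
    also have "\<dots> = \<rho> * U" unfolding UU' using rho U by simp
    finally show ?thesis by simp
  qed
  have ev: "\<And>a m. a < n \<Longrightarrow> m < n \<Longrightarrow> (\<Sum>b<n. \<rho> $$ (a,b) * U $$ (b,m)) = complex_of_real (\<mu> m) * U $$ (a,m)"
  proof -
    fix a m assume a: "a < n" and m: "m < n"
    have "(\<Sum>b<n. \<rho> $$ (a,b) * U $$ (b,m)) = (\<rho> * U) $$ (a,m)"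
      using mult_index2[OF rho U a m] by simp
    also have "\<dots> = (U * D) $$ (a,m)" unfolding rhoU ..
    also have "\<dots> = (\<Sum>c<n. U $$ (a,c) * D $$ (c,m))" using mult_index2[OF U D a m] .
    also have "\<dots> = (\<Sum>c<n. if c = m then U $$ (a,m) * D $$ (m,m) else 0)"
      by (rule sum.cong) (use Dd' m in auto)
    also have "\<dots> = U $$ (a,m) * D $$ (m,m)" using m by simp
    finally show "(\<Sum>b<n. \<rho> $$ (a,b) * U $$ (b,m)) = complex_of_real (\<mu> m) * U $$ (a,m)"
      using Dreal[OF m] by simp
  qed
  have sim: "similar_mat \<rho> D"
  proof -
    have "U * D * mat_adjoint U = \<rho> * U * mat_adjoint U" unfolding rhoU ..
    also have "\<dots> = \<rho>" using rho assoc_mult_mat[OF rho U aU] UU' by simp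
    finally have "\<rho> = U * D * mat_adjoint U" by simp
    then have "similar_mat_wit \<rho> D U (mat_adjoint U)"
      by (intro similar_mat_witI[OF UU' UU _ rho D U aU])
    then show ?thesis unfolding similar_mat_def by blast
  qed
  have ut: "upper_triangular D" using Dd' D unfolding upper_triangular_def by auto
  define \<mu>s where "\<mu>s = map \<mu> [0..<n]"
  have "char_poly \<rho> = (\<Prod>a\<leftarrow>diag_mat D. [:- a, 1:])"
    using char_poly_similar[OF sim] char_poly_upper_triangular[OF D ut] by simp
  then have "proots (char_poly \<rho>) = mset (diag_mat D)" by (simp add: proots_linear_list)
  then have pr: "image_mset Re (proots (char_poly \<rho>)) = mset \<mu>s"
    unfolding diag_mat_def \<mu>s_def \<mu>_def using D by (simp add: mset_map multiset.map_comp comp_def)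
  define L where "L = rev (sort \<mu>s)"
  have eigL: "\<And>i. eig_desc \<rho> (Suc i) = L ! i" unfolding eig_desc_def pr L_def by simp
  have mL: "mset L = mset \<mu>s" unfolding L_def by simp
  have lenmu: "length \<mu>s = n" unfolding \<mu>s_def by simp
  obtain p where p: "p permutes {..<n}" and pL: "permute_list p \<mu>s = L"
    using mset_eq_permutation[OF mL] lenmu by metis
  have pn: "\<And>m. m < n \<Longrightarrow> p m < n" using permutes_in_image[OF p] by simp
  have Lp: "\<And>m. m < n \<Longrightarrow> L ! m = \<mu> (p m)"
    using permute_list_nth[of p \<mu>s] p pL lenmu pn unfolding \<mu>s_def by fastforce
  have pinj: "\<And>m m'. m < n \<Longrightarrow> m' < n \<Longrightarrow> p m = p m' \<longleftrightarrow> m = m'"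
    using permutes_inj[OF p] by (auto dest: injD)
  define E where "E a m = U $$ (a, p m)" for a m
  have O: "\<forall>m<n. \<forall>m'<n. (\<Sum>a<n. cnj (E a m) * E a m') = (if m = m' then 1 else 0)"
  proof (intro allI impI)
    fix m m' assume m: "m < n" and m': "m' < n"
    have "(\<Sum>a<n. cnj (E a m) * E a m') = (mat_adjoint U * U) $$ (p m, p m')"
      unfolding mult_index2[OF aU U pn[OF m] pn[OF m']] E_def
      by (intro sum.cong) (use U pn m m' in auto)
    also have "\<dots> = (if m = m' then 1 else 0)" unfolding UU using pn m m' pinj by simp
    finally show "(\<Sum>a<n. cnj (E a m) * E a m') = (if m = m' then 1 else 0)" .
  qed
  have C: "\<forall>a<n. \<forall>b<n. (\<Sum>m<n. E a m * cnj (E b m)) = (if a = b then 1 else 0)"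
  proof (intro allI impI)
    fix a b assume a: "a < n" and b: "b < n"
    have "(\<Sum>m<n. U $$ (a, m) * cnj (U $$ (b, m))) = (\<Sum>m<n. E a m * cnj (E b m))"
      unfolding E_def using sum.permute[OF p, of "\<lambda>m. U $$ (a, m) * cnj (U $$ (b, m))"] by (simp add: comp_def)
    moreover have "(\<Sum>m<n. U $$ (a, m) * cnj (U $$ (b, m))) = (U * mat_adjoint U) $$ (a,b)"
      unfolding mult_index2[OF U aU a b] by (intro sum.cong) (use U a b in auto)
    ultimately show "(\<Sum>m<n. E a m * cnj (E b m)) = (if a = b then 1 else 0)"
      unfolding UU' using a b by simp
  qed
  have Ev: "\<forall>a<n. \<forall>m<n. (\<Sum>b<n. \<rho> $$ (a,b) * E b m) = complex_of_real (eig_desc \<rho> (Suc m)) * E a m"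
    using ev pn Lp eigL unfolding E_def by simp
  have mono: "\<forall>i j. i \<le> j \<longrightarrow> j < n \<longrightarrow> eig_desc \<rho> (Suc j) \<le> eig_desc \<rho> (Suc i)"
  proof (intro allI impI)
    fix i j assume ij: "i \<le> j" and j: "j < n"
    have "sort \<mu>s ! (n - Suc j) \<le> sort \<mu>s ! (n - Suc i)"
      by (rule sorted_nth_mono) (use ij j lenmu in auto)
    then show "eig_desc \<rho> (Suc j) \<le> eig_desc \<rho> (Suc i)"
      unfolding eigL L_def using ij j lenmu by (simp add: rev_nth)
  qed
  show ?thesis using O C Ev mono by blast
qed




lemma sum_if_less: "(J::nat) \<le> n \<Longrightarrow> (\<Sum>m<n. if m < J then f m else 0) = (\<Sum>m<J. (f m :: real))"
proof -
  assume J: "J \<le> n"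
  have "(\<Sum>m<n. if m < J then f m else 0) = (\<Sum>m<J. if m < J then f m else 0)"
    using J by (intro sum.mono_neutral_right) auto
  also have "\<dots> = (\<Sum>m<J. f m)" by simp
  finally show ?thesis .
qed

lemma one_block:
  fixes lam c :: "nat \<Rightarrow> real"
  assumes J: "1 \<le> J" "J \<le> n"
    and lam: "\<And>i j. i \<le> j \<Longrightarrow> j < n \<Longrightarrow> lam j \<le> lam i"
    and c0: "\<And>m. m < n \<Longrightarrow> 0 \<le> c m" and c1: "\<And>m. m < n \<Longrightarrow> c m \<le> 1"
    and cs: "(\<Sum>m<n. c m) = real J"
  shows "(\<Sum>m<n. lam m * c m) \<le> (\<Sum>m<J. lam m)"
    and "(\<Sum>m<n. lam m * c m) = (\<Sum>m<J. lam m) \<Longrightarrow> (\<forall>m<n. J \<le> m \<longrightarrow> 0 < c m \<longrightarrow> lam m = lam (J - 1))"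
proof -
  define t where "t = lam (J - 1)"
  define g where "g m = (lam m - t) * (c m - (if m < J then 1 else 0))" for m
  have ind: "(\<Sum>m<n. (if m < J then 1 else 0 :: real)) = real J"
    using sum_if_less[OF J(2), of "\<lambda>_. 1"] by simp
  have ind2: "(\<Sum>m<n. (if m < J then lam m else 0)) = (\<Sum>m<J. lam m)"
    using sum_if_less[OF J(2)] by simp
  have eq: "(\<Sum>m<n. lam m * c m) - (\<Sum>m<J. lam m) = (\<Sum>m<n. g m)"
  proof -
    have gexp: "\<And>m. g m = lam m * c m - (if m < J then lam m else 0) - t * c m + t * (if m < J then 1 else 0)"
      by (simp add: g_def algebra_simps)
    have "(\<Sum>m<n. g m) = (\<Sum>m<n. lam m * c m) - (\<Sum>m<n. (if m < J then lam m else 0)) - t * (\<Sum>m<n. c m)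
        + t * (\<Sum>m<n. (if m < J then 1 else 0))"
      unfolding gexp sum.distrib sum_subtractf sum_distrib_left ..
    then show ?thesis using ind ind2 cs by simp
  qed
  have gle: "\<And>m. m < n \<Longrightarrow> g m \<le> 0"
  proof -
    fix m assume m: "m < n"
    show "g m \<le> 0"
    proof (cases "m < J")
      case True
      then have "t \<le> lam m" unfolding t_def using lam[of m "J - 1"] J by auto
      then show ?thesis unfolding g_def using True c1[OF m] by (simp add: mult_nonneg_nonpos)
    next
      case False
      then have "lam m \<le> t" unfolding t_def using lam[of "J - 1" m] J m by auto
      then show ?thesis unfolding g_def using False c0[OF m] by (simp add: mult_nonpos_nonneg)
    qed
  qed
  have "(\<Sum>m<n. g m) \<le> 0" using gle by (intro sum_nonpos) auto
  then show "(\<Sum>m<n. lam m * c m) \<le> (\<Sum>m<J. lam m)" using eq by simp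
  assume E: "(\<Sum>m<n. lam m * c m) = (\<Sum>m<J. lam m)"
  then have "(\<Sum>m<n. - g m) = 0" using eq by (simp add: sum_negf)
  then have z: "\<forall>m\<in>{..<n}. - g m = 0"
    by (subst sum_nonneg_eq_0_iff[symmetric]) (use gle in \<open>auto simp: \<close>)
  show "\<forall>m<n. J \<le> m \<longrightarrow> 0 < c m \<longrightarrow> lam m = lam (J - 1)"
  proof (intro allI impI)
    fix m assume m: "m < n" "J \<le> m" "0 < c m"
    then have "g m = 0" using z by auto
    then show "lam m = lam (J - 1)" using m unfolding g_def t_def by simp
  qed
qed

lemma abel: "(\<Sum>i<k. w i * a i) = (\<Sum>j<k. (w j - w (Suc j)) * (\<Sum>i<Suc j. a i)) + w k * (\<Sum>i<k. (a i :: real))"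
  by (induction k) (simp_all add: algebra_simps)

lemma kyfan_core:
  fixes w lam :: "nat \<Rightarrow> real" and p :: "nat \<Rightarrow> nat \<Rightarrow> real"
  assumes kn: "k \<le> n"
    and wdec: "\<And>i. i < k \<Longrightarrow> w (Suc i) < w i" and wk: "w k = 0"
    and lam: "\<And>i j. i \<le> j \<Longrightarrow> j < n \<Longrightarrow> lam j \<le> lam i"
    and p0: "\<And>i m. i < k \<Longrightarrow> m < n \<Longrightarrow> 0 \<le> p i m"
    and prow: "\<And>i. i < k \<Longrightarrow> (\<Sum>m<n. p i m) = 1"
    and pcol: "\<And>m. m < n \<Longrightarrow> (\<Sum>i<k. p i m) \<le> 1"
  shows "(\<Sum>i<k. w i * (\<Sum>m<n. lam m * p i m)) \<le> (\<Sum>i<k. w i * lam i)"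
    and "(\<Sum>i<k. w i * (\<Sum>m<n. lam m * p i m)) = (\<Sum>i<k. w i * lam i) \<Longrightarrow>
         (\<forall>i<k. \<forall>m<n. 0 < p i m \<longrightarrow> lam m = lam i)"
proof -
  define a where "a i = (\<Sum>m<n. lam m * p i m)" for i
  define G where "G j = (\<Sum>i<Suc j. a i)" for j
  define H where "H j = (\<Sum>i<Suc j. lam i)" for j
  define c where "c j m = (\<Sum>i<Suc j. p i m)" for j m
  have Gc: "\<And>j. G j = (\<Sum>m<n. lam m * c j m)"
    unfolding G_def a_def c_def sum_distrib_left by (rule sum.swap)
  have blk: "\<And>j. j < k \<Longrightarrow> G j \<le> H j \<and> (G j = H j \<longrightarrow> (\<forall>m<n. Suc j \<le> m \<longrightarrow> 0 < c j m \<longrightarrow> lam m = lam j))"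
  proof -
    fix j assume j: "j < k"
    have c0: "\<And>m. m < n \<Longrightarrow> 0 \<le> c j m" unfolding c_def using p0 j by (intro sum_nonneg) auto
    have c1: "\<And>m. m < n \<Longrightarrow> c j m \<le> 1"
    proof -
      fix m assume m: "m < n"
      have "c j m \<le> (\<Sum>i<k. p i m)" unfolding c_def
        by (rule sum_mono2) (use j p0 m in auto)
      then show "c j m \<le> 1" using pcol[OF m] by simp
    qed
    have "(\<Sum>m<n. c j m) = (\<Sum>i<Suc j. \<Sum>m<n. p i m)" unfolding c_def by (rule sum.swap)
    also have "\<dots> = (\<Sum>i<Suc j. 1)" by (rule sum.cong) (use prow j in auto)
    finally have cs: "(\<Sum>m<n. c j m) = real (Suc j)" by simp
    have J1: "1 \<le> Suc j" by simp
    have J2: "Suc j \<le> n" using j kn by simp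
    note ob = one_block[where J="Suc j" and n=n and lam=lam and c="c j", OF J1 J2 lam c0 c1 cs]
    have "Suc j - 1 = j" by simp
    then show "G j \<le> H j \<and> (G j = H j \<longrightarrow> (\<forall>m<n. Suc j \<le> m \<longrightarrow> 0 < c j m \<longrightarrow> lam m = lam j))"
      unfolding Gc H_def using ob(1) ob(2) by metis
  qed
  define d where "d j = w j - w (Suc j)" for j
  have dpos: "\<And>j. j < k \<Longrightarrow> 0 < d j" unfolding d_def using wdec by auto
  have f: "(\<Sum>i<k. w i * a i) = (\<Sum>j<k. d j * G j)" unfolding G_def d_def using abel[of w a k] wk by simp
  have F: "(\<Sum>i<k. w i * lam i) = (\<Sum>j<k. d j * H j)" unfolding H_def d_def using abel[of w lam k] wk by simp
  have diff: "(\<Sum>i<k. w i * lam i) - (\<Sum>i<k. w i * a i) = (\<Sum>j<k. d j * (H j - G j))"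
    unfolding f F by (simp add: sum_subtractf algebra_simps)
  have termnn: "\<And>j. j < k \<Longrightarrow> 0 \<le> d j * (H j - G j)" using dpos blk by (simp add: less_imp_le)
  have "0 \<le> (\<Sum>j<k. d j * (H j - G j))" using termnn by (intro sum_nonneg) auto
  then show "(\<Sum>i<k. w i * (\<Sum>m<n. lam m * p i m)) \<le> (\<Sum>i<k. w i * lam i)"
    using diff unfolding a_def by simp
  assume eqF: "(\<Sum>i<k. w i * (\<Sum>m<n. lam m * p i m)) = (\<Sum>i<k. w i * lam i)"
  then have "(\<Sum>j<k. d j * (H j - G j)) = 0" using diff unfolding a_def by simp
  then have "\<forall>j\<in>{..<k}. d j * (H j - G j) = 0"
    by (subst sum_nonneg_eq_0_iff[symmetric]) (use termnn in auto)
  then have GH: "\<And>j. j < k \<Longrightarrow> G j = H j"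
  proof -
    fix j assume Z: "\<forall>j\<in>{..<k}. d j * (H j - G j) = 0" and j: "j < k"
    then have "d j * (H j - G j) = 0" by auto
    then show "G j = H j" using dpos[OF j] by simp
  qed
  have ai: "\<And>i. i < k \<Longrightarrow> a i = lam i"
  proof -
    fix i assume i: "i < k"
    show "a i = lam i"
    proof (cases i)
      case 0
      then show ?thesis using GH[OF i] unfolding G_def H_def by simp
    next
      case (Suc i')
      have "G i = G i' + a i" "H i = H i' + lam i" unfolding G_def H_def Suc by simp_all
      then show ?thesis using GH[OF i] GH[of i'] i Suc by simp
    qed
  qed
  show "\<forall>i<k. \<forall>m<n. 0 < p i m \<longrightarrow> lam m = lam i"
  proof (intro allI impI)
    fix i m assume i: "i < k" and m: "m < n" and pp: "0 < p i m"
    have gt: "\<And>m'. m' < n \<Longrightarrow> i < m' \<Longrightarrow> 0 < p i m' \<Longrightarrow> lam m' = lam i"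
    proof -
      fix m' assume m': "m' < n" "i < m'" "0 < p i m'"
      have "p i m' \<le> c i m'" unfolding c_def
        by (rule member_le_sum) (use p0 i m' in auto)
      then show "lam m' = lam i" using blk[OF i] GH[OF i] m' by auto
    qed
    define h where "h m' = (lam m' - lam i) * p i m'" for m'
    have hnn: "\<And>m'. m' < n \<Longrightarrow> 0 \<le> h m'"
    proof -
      fix m' assume m': "m' < n"
      show "0 \<le> h m'"
      proof (cases "m' \<le> i")
        case True
        then show ?thesis unfolding h_def using lam[of m' i] i kn p0[OF i m'] by auto
      next
        case False
        then show ?thesis unfolding h_def using gt[OF m'] p0[OF i m'] by (cases "0 < p i m'") auto
      qed
    qed
    have "(\<Sum>m'<n. h m') = a i - lam i * (\<Sum>m'<n. p i m')"
      unfolding h_def a_def by (simp add: algebra_simps sum_subtractf sum_distrib_left)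
    also have "\<dots> = 0" using ai[OF i] prow[OF i] by simp
    finally have "\<forall>m'\<in>{..<n}. h m' = 0"
      by (subst sum_nonneg_eq_0_iff[symmetric]) (use hnn in auto)
    then have "h m = 0" using m by auto
    then show "lam m = lam i" using pp unfolding h_def by simp
  qed
qed




definition coef :: "nat \<Rightarrow> (nat \<Rightarrow> nat \<Rightarrow> complex) \<Rightarrow> nat \<Rightarrow> complex vec \<Rightarrow> complex" where
  "coef n E m x = (\<Sum>a<n. cnj (E a m) * x $ a)"

definition quad :: "nat \<Rightarrow> complex mat \<Rightarrow> complex vec \<Rightarrow> complex" where
  "quad n \<rho> x = (\<Sum>a<n. cnj (x $ a) * (\<Sum>b<n. \<rho> $$ (a,b) * x $ b))"

lemma mat_vec_index: "\<rho> \<in> carrier_mat n n \<Longrightarrow> x \<in> carrier_vec n \<Longrightarrow> a < n \<Longrightarrow>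
   (\<rho> *\<^sub>v x) $ a = (\<Sum>b<n. \<rho> $$ (a,b) * x $ b)"
  by (simp add: scalar_prod_def atLeast0LessThan)

lemma quad_eig: assumes rho: "\<rho> \<in> carrier_mat n n" and x: "x \<in> carrier_vec n"
  and ev: "\<rho> *\<^sub>v x = complex_of_real \<mu> \<cdot>\<^sub>v x" and un: "x \<bullet>c x = 1"
  shows "quad n \<rho> x = complex_of_real \<mu>"
proof -
  have "quad n \<rho> x = (\<Sum>a<n. cnj (x $ a) * (complex_of_real \<mu> * x $ a))"
    unfolding quad_def
  proof (rule sum.cong)
    fix a assume a: "a \<in> {..<n}"
    have "(\<Sum>b<n. \<rho> $$ (a,b) * x $ b) = (\<rho> *\<^sub>v x) $ a" using mat_vec_index[OF rho x] a by simp
    also have "\<dots> = complex_of_real \<mu> * x $ a" using ev a x by simp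
    finally show "cnj (x $ a) * (\<Sum>b<n. \<rho> $$ (a,b) * x $ b) = cnj (x $ a) * (complex_of_real \<mu> * x $ a)" by simp
  qed simp
  also have "\<dots> = complex_of_real \<mu> * (x \<bullet>c x)"
    using x by (simp add: scalar_prod_def atLeast0LessThan sum_distrib_left ac_simps)
  finally show ?thesis using un by simp
qed

lemma bessel:
  fixes u :: "nat \<Rightarrow> complex" and x :: "nat \<Rightarrow> nat \<Rightarrow> complex"
  assumes orth: "\<And>i j. i < k \<Longrightarrow> j < k \<Longrightarrow> (\<Sum>a<n. x i a * cnj (x j a)) = (if i = j then 1 else 0)"
  shows "(\<Sum>i<k. (cmod (\<Sum>a<n. cnj (u a) * x i a))^2) \<le> (\<Sum>a<n. (cmod (u a))^2)"
proof -
  define c where "c i = (\<Sum>a<n. cnj (x i a) * u a)" for i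
  define s where "s a = (\<Sum>i<k. c i * x i a)" for a
  have cc: "\<And>i. cmod (\<Sum>a<n. cnj (u a) * x i a) = cmod (c i)"
  proof -
    fix i have "(\<Sum>a<n. cnj (u a) * x i a) = cnj (c i)" unfolding c_def by (simp add: mult.commute)
    then show "cmod (\<Sum>a<n. cnj (u a) * x i a) = cmod (c i)" by simp
  qed
  have S1: "(\<Sum>a<n. s a * cnj (u a)) = (\<Sum>i<k. c i * cnj (c i))"
  proof -
    have "(\<Sum>a<n. s a * cnj (u a)) = (\<Sum>a<n. \<Sum>i<k. c i * (x i a * cnj (u a)))"
      unfolding s_def by (simp add: sum_distrib_right mult.assoc)
    also have "\<dots> = (\<Sum>i<k. \<Sum>a<n. c i * (x i a * cnj (u a)))" by (rule sum.swap)
    also have "\<dots> = (\<Sum>i<k. c i * cnj (c i))"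
      unfolding c_def by (simp add: sum_distrib_left mult.commute)
    finally show ?thesis .
  qed
  have S2: "(\<Sum>a<n. s a * cnj (s a)) = (\<Sum>i<k. c i * cnj (c i))"
  proof -
    have "(\<Sum>a<n. s a * cnj (s a)) = (\<Sum>a<n. \<Sum>i<k. \<Sum>j<k. c i * cnj (c j) * (x i a * cnj (x j a)))"
      unfolding s_def by (simp add: sum_distrib_right sum_distrib_left ac_simps) (rule sum.cong[OF refl], rule sum.swap)
    also have "\<dots> = (\<Sum>i<k. \<Sum>a<n. \<Sum>j<k. c i * cnj (c j) * (x i a * cnj (x j a)))" by (rule sum.swap)
    also have "\<dots> = (\<Sum>i<k. \<Sum>j<k. \<Sum>a<n. c i * cnj (c j) * (x i a * cnj (x j a)))"
      by (rule sum.cong, simp, rule sum.swap)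
    also have "\<dots> = (\<Sum>i<k. \<Sum>j<k. c i * cnj (c j) * (if i = j then 1 else 0))"
      by (rule sum.cong, simp, rule sum.cong, simp) (simp add: sum_distrib_left[symmetric] orth)
    also have "\<dots> = (\<Sum>i<k. c i * cnj (c i))"
      by (rule sum.cong) (simp_all add: if_distrib cong: if_cong)
    finally show ?thesis .
  qed
  have nn: "0 \<le> (\<Sum>a<n. (cmod (u a - s a))^2)" by (intro sum_nonneg) auto
  have "complex_of_real (\<Sum>a<n. (cmod (u a - s a))^2) = (\<Sum>a<n. (u a - s a) * cnj (u a - s a))"
    by (simp add: complex_norm_square del: of_real_power)
  also have "\<dots> = (\<Sum>a<n. u a * cnj (u a)) - cnj (\<Sum>a<n. s a * cnj (u a)) - (\<Sum>a<n. s a * cnj (u a)) + (\<Sum>a<n. s a * cnj (s a))"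
    by (simp add: algebra_simps sum_subtractf sum.distrib)
  also have "\<dots> = (\<Sum>a<n. u a * cnj (u a)) - (\<Sum>i<k. c i * cnj (c i))"
    unfolding S1 S2 by (simp add: mult.commute)
  also have "\<dots> = complex_of_real ((\<Sum>a<n. (cmod (u a))^2) - (\<Sum>i<k. (cmod (c i))^2))"
    by (simp add: complex_norm_square del: of_real_power)
  finally have "(\<Sum>a<n. (cmod (u a - s a))^2) = (\<Sum>a<n. (cmod (u a))^2) - (\<Sum>i<k. (cmod (c i))^2)"
    using of_real_eq_iff by blast
  then show ?thesis using nn cc by simp
qed

context
  fixes n :: nat and \<rho> :: "complex mat" and E :: "nat \<Rightarrow> nat \<Rightarrow> complex" and lam :: "nat \<Rightarrow> real"
  assumes rho: "\<rho> \<in> carrier_mat n n"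
    and EC: "\<forall>a<n. \<forall>b<n. (\<Sum>m<n. E a m * cnj (E b m)) = (if a = b then 1 else 0)"
    and EV: "\<forall>a<n. \<forall>m<n. (\<Sum>b<n. \<rho> $$ (a,b) * E b m) = complex_of_real (lam m) * E a m"
begin

lemma expand: assumes x: "x \<in> carrier_vec n" and a: "a < n"
  shows "x $ a = (\<Sum>m<n. coef n E m x * E a m)"
proof -
  have "(\<Sum>m<n. coef n E m x * E a m) = (\<Sum>m<n. \<Sum>b<n. x $ b * (E a m * cnj (E b m)))"
    unfolding coef_def sum_distrib_right by (intro sum.cong refl) (simp add: ac_simps)
  also have "\<dots> = (\<Sum>b<n. \<Sum>m<n. x $ b * (E a m * cnj (E b m)))" by (rule sum.swap)
  also have "\<dots> = (\<Sum>b<n. x $ b * (if a = b then 1 else 0))"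
  proof (rule sum.cong[OF refl])
    fix b assume b: "b \<in> {..<n}"
    show "(\<Sum>m<n. x $ b * (E a m * cnj (E b m))) = x $ b * (if a = b then 1 else 0)"
      using EC a b by (simp add: sum_distrib_left[symmetric])
  qed
  also have "\<dots> = x $ a" using a by (simp add: if_distrib cong: if_cong)
  finally show ?thesis by simp
qed

lemma rho_apply: assumes x: "x \<in> carrier_vec n" and a: "a < n"
  shows "(\<Sum>b<n. \<rho> $$ (a,b) * x $ b) = (\<Sum>m<n. coef n E m x * (complex_of_real (lam m) * E a m))"
proof -
  have "(\<Sum>b<n. \<rho> $$ (a,b) * x $ b) = (\<Sum>b<n. \<rho> $$ (a,b) * (\<Sum>m<n. coef n E m x * E b m))"
    by (rule sum.cong[OF refl]) (use expand[OF x] in auto)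
  also have "\<dots> = (\<Sum>b<n. \<Sum>m<n. coef n E m x * (\<rho> $$ (a,b) * E b m))"
    by (simp add: sum_distrib_left ac_simps)
  also have "\<dots> = (\<Sum>m<n. \<Sum>b<n. coef n E m x * (\<rho> $$ (a,b) * E b m))" by (rule sum.swap)
  also have "\<dots> = (\<Sum>m<n. coef n E m x * (complex_of_real (lam m) * E a m))"
  proof (rule sum.cong[OF refl])
    fix m assume m: "m \<in> {..<n}"
    show "(\<Sum>b<n. coef n E m x * (\<rho> $$ (a,b) * E b m)) = coef n E m x * (complex_of_real (lam m) * E a m)"
      using EV a m by (simp add: sum_distrib_left[symmetric])
  qed
  finally show ?thesis .
qed

lemma cnj_coef: "cnj (coef n E m y) = (\<Sum>a<n. E a m * cnj (y $ a))"
  by (simp add: coef_def mult.commute)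

lemma inner_coef: assumes x: "x \<in> carrier_vec n" and y: "y \<in> carrier_vec n"
  and f: "\<And>a. a < n \<Longrightarrow> f a = (\<Sum>m<n. coef n E m x * (g m * E a m))"
  shows "(\<Sum>a<n. cnj (y $ a) * f a) = (\<Sum>m<n. coef n E m x * g m * cnj (coef n E m y))"
proof -
  have "(\<Sum>a<n. cnj (y $ a) * f a) = (\<Sum>a<n. \<Sum>m<n. coef n E m x * g m * (cnj (y $ a) * E a m))"
    by (rule sum.cong[OF refl]) (simp add: f sum_distrib_left ac_simps)
  also have "\<dots> = (\<Sum>m<n. \<Sum>a<n. coef n E m x * g m * (cnj (y $ a) * E a m))" by (rule sum.swap)
  also have "\<dots> = (\<Sum>m<n. coef n E m x * g m * cnj (coef n E m y))"
    by (rule sum.cong[OF refl]) (simp add: cnj_coef sum_distrib_left ac_simps)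
  finally show ?thesis .
qed

lemma quad_re: assumes x: "x \<in> carrier_vec n"
  shows "Re (quad n \<rho> x) = (\<Sum>m<n. lam m * (cmod (coef n E m x))^2)"
proof -
  have "quad n \<rho> x = (\<Sum>m<n. coef n E m x * complex_of_real (lam m) * cnj (coef n E m x))"
    unfolding quad_def by (rule inner_coef[OF x x]) (rule rho_apply[OF x])
  also have "\<dots> = complex_of_real (\<Sum>m<n. lam m * (cmod (coef n E m x))^2)"
    by (simp add: complex_norm_square mult.commute mult.left_commute del: of_real_power)
  finally show ?thesis by simp
qed

lemma parseval: assumes x: "x \<in> carrier_vec n"
  shows "(\<Sum>m<n. (cmod (coef n E m x))^2) = Re (x \<bullet>c x)"
proof -
  have "(\<Sum>a<n. cnj (x $ a) * x $ a) = (\<Sum>m<n. coef n E m x * 1 * cnj (coef n E m x))"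
    by (rule inner_coef[OF x x]) (simp add: expand[OF x])
  also have "\<dots> = complex_of_real (\<Sum>m<n. (cmod (coef n E m x))^2)"
    by (simp add: complex_norm_square del: of_real_power)
  finally have "x \<bullet>c x = complex_of_real (\<Sum>m<n. (cmod (coef n E m x))^2)"
    using x by (simp add: scalar_prod_def atLeast0LessThan mult.commute)
  then show ?thesis by simp
qed

lemma eigen_concl: assumes x: "x \<in> carrier_vec n"
  and h: "\<forall>m<n. coef n E m x \<noteq> 0 \<longrightarrow> lam m = \<mu>"
  shows "\<rho> *\<^sub>v x = complex_of_real \<mu> \<cdot>\<^sub>v x"
proof (rule eq_vecI)
  fix a assume "a < dim_vec (complex_of_real \<mu> \<cdot>\<^sub>v x)"
  then have a: "a < n" using x by simp
  have "(\<rho> *\<^sub>v x) $ a = (\<Sum>m<n. coef n E m x * (complex_of_real (lam m) * E a m))"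
    using mat_vec_index[OF rho x a] rho_apply[OF x a] by simp
  also have "\<dots> = (\<Sum>m<n. coef n E m x * (complex_of_real \<mu> * E a m))"
    by (rule sum.cong[OF refl]) (use h in \<open>case_tac "coef n E x2 x = 0"; auto\<close>)
  also have "\<dots> = complex_of_real \<mu> * x $ a"
    using expand[OF x a] by (simp add: sum_distrib_left ac_simps)
  finally show "(\<rho> *\<^sub>v x) $ a = (complex_of_real \<mu> \<cdot>\<^sub>v x) $ a" using a x by simp
qed (use rho x in simp)

end

lemma hs_inner_eq: assumes X: "X \<in> carrier_mat n n" and Y: "Y \<in> carrier_mat n n"
  shows "hs_inner X Y = (\<Sum>i<n. \<Sum>a<n. cnj (X $$ (a,i)) * Y $$ (a,i))"
proof -
  have aX: "mat_adjoint X \<in> carrier_mat n n" using X by simp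
  have "hs_inner X Y = (\<Sum>i<n. (mat_adjoint X * Y) $$ (i,i))"
    unfolding hs_inner_def mtrace_def using aX Y X by simp
  also have "\<dots> = (\<Sum>i<n. \<Sum>a<n. cnj (X $$ (a,i)) * Y $$ (a,i))"
  proof (rule sum.cong[OF refl])
    fix i assume i: "i \<in> {..<n}"
    show "(mat_adjoint X * Y) $$ (i,i) = (\<Sum>a<n. cnj (X $$ (a,i)) * Y $$ (a,i))"
      using i X by (subst mult_index2[OF aX Y]) (auto intro!: sum.cong)
  qed
  finally show ?thesis .
qed

lemma outer_carrier: "outer n x \<in> carrier_mat n n" by (simp add: outer_def)
lemma wo_carrier: "weighted_outer n k v xs \<in> carrier_mat n n" by (simp add: weighted_outer_def)

lemma hs_outer: assumes rho: "\<rho> \<in> carrier_mat n n"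
  shows "hs_inner (outer n x) \<rho> = quad n \<rho> x"
proof -
  have "hs_inner (outer n x) \<rho> = (\<Sum>i<n. \<Sum>a<n. cnj (x $ a) * (\<rho> $$ (a,i) * x $ i))"
    unfolding hs_inner_eq[OF outer_carrier rho] by (simp add: outer_def ac_simps)
  also have "\<dots> = (\<Sum>a<n. \<Sum>i<n. cnj (x $ a) * (\<rho> $$ (a,i) * x $ i))" by (rule sum.swap)
  also have "\<dots> = quad n \<rho> x" unfolding quad_def by (simp add: sum_distrib_left)
  finally show ?thesis .
qed

lemma hs_weighted: assumes rho: "\<rho> \<in> carrier_mat n n"
  shows "hs_inner (weighted_outer n k v xs) \<rho> = (\<Sum>j<k. quad n \<rho> (xs ! j) * complex_of_real (v (Suc j)))"
proof -
  have "hs_inner (weighted_outer n k v xs) \<rho>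
     = (\<Sum>i<n. \<Sum>a<n. \<Sum>j<k. complex_of_real (v (Suc j)) * (cnj (xs ! j $ a) * (\<rho> $$ (a,i) * xs ! j $ i)))"
    unfolding hs_inner_eq[OF wo_carrier rho]
    by (simp add: weighted_outer_def sum_distrib_right sum_distrib_left ac_simps)
  also have "\<dots> = (\<Sum>i<n. \<Sum>j<k. \<Sum>a<n. complex_of_real (v (Suc j)) * (cnj (xs ! j $ a) * (\<rho> $$ (a,i) * xs ! j $ i)))"
    by (rule sum.cong[OF refl], rule sum.swap)
  also have "\<dots> = (\<Sum>j<k. \<Sum>i<n. \<Sum>a<n. complex_of_real (v (Suc j)) * (cnj (xs ! j $ a) * (\<rho> $$ (a,i) * xs ! j $ i)))"
    by (rule sum.swap)
  also have "\<dots> = (\<Sum>j<k. complex_of_real (v (Suc j)) * hs_inner (outer n (xs ! j)) \<rho>)"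
    unfolding hs_inner_eq[OF outer_carrier rho]
    by (simp add: outer_def sum_distrib_left ac_simps)
  also have "\<dots> = (\<Sum>j<k. quad n \<rho> (xs ! j) * complex_of_real (v (Suc j)))"
    by (simp add: hs_outer[OF rho] mult.commute)
  finally show ?thesis .
qed

lemma score_eq: assumes rho: "\<rho> \<in> carrier_mat n n" and vk: "v (Suc k) = 0"
  shows "qscore_exp {1..k+1} (\<lambda>_ y. v y) (top_mu n k) xs \<rho> = (\<Sum>j<k. quad n \<rho> (xs ! j) * complex_of_real (v (Suc j)))"
proof -
  have "{1..k+1} = insert (Suc k) {1..k}" by auto
  then have "qscore_exp {1..k+1} (\<lambda>_ y. v y) (top_mu n k) xs \<rho>
      = (\<Sum>y\<in>{1..k}. hs_inner (top_mu n k xs y) \<rho> * complex_of_real (v y))"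
    unfolding qscore_exp_def using vk by simp
  also have "\<dots> = (\<Sum>y\<in>Suc ` {..<k}. hs_inner (top_mu n k xs y) \<rho> * complex_of_real (v y))"
    by (simp add: image_Suc_lessThan)
  also have "\<dots> = (\<Sum>j<k. hs_inner (top_mu n k xs (Suc j)) \<rho> * complex_of_real (v (Suc j)))"
    by (subst sum.reindex) auto
  also have "\<dots> = (\<Sum>j<k. quad n \<rho> (xs ! j) * complex_of_real (v (Suc j)))"
    by (rule sum.cong[OF refl]) (simp add: top_mu_def hs_outer[OF rho])
  finally show ?thesis .
qed

lemma argmax_char:
  fixes n k :: nat and v :: "nat \<Rightarrow> real" and \<rho> :: "complex mat"
  assumes k1: "1 \<le> k" and kn: "k \<le> n"
    and vdec: "\<forall>i. 1 \<le> i \<and> i < k \<longrightarrow> v (Suc i) < v i"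
    and vk: "0 < v k" and vk1: "v (Suc k) = 0"
    and dens: "density n \<rho>"
  shows "qargmax (orthonormal_tuples n k) {1..k+1} (\<lambda>_ y. v y) (top_mu n k) \<rho>
    = {xs \<in> orthonormal_tuples n k. \<forall>i<k. \<rho> *\<^sub>v (xs ! i) = complex_of_real (eig_desc \<rho> (Suc i)) \<cdot>\<^sub>v (xs ! i)}"
proof -
  have rho: "\<rho> \<in> carrier_mat n n" using dens by (simp add: density_def)
  obtain E where H: "(\<forall>m<n. \<forall>m'<n. (\<Sum>a<n. cnj (E a m) * E a m') = (if m = m' then 1 else 0)) \<and>
    (\<forall>a<n. \<forall>b<n. (\<Sum>m<n. E a m * cnj (E b m)) = (if a = b then 1 else 0)) \<and>
    (\<forall>a<n. \<forall>m<n. (\<Sum>b<n. \<rho> $$ (a,b) * E b m) = complex_of_real (eig_desc \<rho> (Suc m)) * E a m) \<and>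
    (\<forall>i j. i \<le> j \<longrightarrow> j < n \<longrightarrow> eig_desc \<rho> (Suc j) \<le> eig_desc \<rho> (Suc i))"
    using eig_basis[OF dens] by (elim exE) (rule that)
  note EO = conjunct1[OF H]
  note EC = conjunct1[OF conjunct2[OF H]]
  note EV = conjunct1[OF conjunct2[OF conjunct2[OF H]]]
  note mono = conjunct2[OF conjunct2[OF conjunct2[OF H]]]
  define lam where "lam m = eig_desc \<rho> (Suc m)" for m
  have EV': "\<forall>a<n. \<forall>m<n. (\<Sum>b<n. \<rho> $$ (a,b) * E b m) = complex_of_real (lam m) * E a m"
    using EV unfolding lam_def .
  define R where "R = orthonormal_tuples n k"
  define f where "f xs = Re (qscore_exp {1..k+1} (\<lambda>_ y. v y) (top_mu n k) xs \<rho>)" for xs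
  define F where "F = (\<Sum>i<k. v (Suc i) * lam i)"
  have Rc: "\<And>xs i. xs \<in> R \<Longrightarrow> i < k \<Longrightarrow> xs ! i \<in> carrier_vec n"
  proof -
    fix xs i assume "xs \<in> R" "i < k"
    then have "length xs = k" "set xs \<subseteq> carrier_vec n" "i < length xs"
      unfolding R_def orthonormal_tuples_def by simp_all
    then show "xs ! i \<in> carrier_vec n" using nth_mem by blast
  qed
  have Ro: "\<And>xs i j. xs \<in> R \<Longrightarrow> i < k \<Longrightarrow> j < k \<Longrightarrow> xs ! i \<bullet>c xs ! j = (if i = j then 1 else 0)"
    unfolding R_def orthonormal_tuples_def by blast
  have fq: "\<And>xs. f xs = (\<Sum>j<k. v (Suc j) * Re (quad n \<rho> (xs ! j)))"
    unfolding f_def score_eq[where v=v and k=k, OF rho vk1] by (simp add: mult.commute)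
  have fF: "\<And>xs. xs \<in> R \<Longrightarrow> (\<forall>i<k. \<rho> *\<^sub>v (xs ! i) = complex_of_real (lam i) \<cdot>\<^sub>v (xs ! i)) \<Longrightarrow> f xs = F"
  proof -
    fix xs assume xs: "xs \<in> R" and ev: "\<forall>i<k. \<rho> *\<^sub>v (xs ! i) = complex_of_real (lam i) \<cdot>\<^sub>v (xs ! i)"
    have "\<And>j. j < k \<Longrightarrow> quad n \<rho> (xs ! j) = complex_of_real (lam j)"
    proof -
      fix j assume j: "j < k"
      show "quad n \<rho> (xs ! j) = complex_of_real (lam j)"
        by (rule quad_eig[OF rho Rc[OF xs j]]) (use ev j Ro[OF xs j j] in auto)
    qed
    then show "f xs = F" unfolding fq F_def by (intro sum.cong refl) simp
  qed
  have core: "\<And>xs. xs \<in> R \<Longrightarrow> f xs \<le> F \<and> (f xs = F \<longrightarrow> (\<forall>i<k. \<rho> *\<^sub>v (xs ! i) = complex_of_real (lam i) \<cdot>\<^sub>v (xs ! i)))"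
  proof -
    fix xs assume xs: "xs \<in> R"
    define p where "p i m = (cmod (coef n E m (xs ! i)))^2" for i m
    have fp: "f xs = (\<Sum>i<k. v (Suc i) * (\<Sum>m<n. lam m * p i m))"
      unfolding fq p_def by (intro sum.cong refl) (simp add: quad_re[OF rho EC EV' Rc[OF xs]])
    have wdec: "\<And>i. i < k \<Longrightarrow> v (Suc (Suc i)) < v (Suc i)"
    proof -
      fix i assume i: "i < k"
      show "v (Suc (Suc i)) < v (Suc i)"
      proof (cases "Suc i < k")
        case True then show ?thesis using vdec by auto
      next
        case False then have "Suc i = k" using i by simp
        then show ?thesis using vk vk1 by simp
      qed
    qed
    have lamm: "\<And>i j. i \<le> j \<Longrightarrow> j < n \<Longrightarrow> lam j \<le> lam i" using mono unfolding lam_def by auto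
    have p0: "\<And>i m. i < k \<Longrightarrow> m < n \<Longrightarrow> 0 \<le> p i m" unfolding p_def by simp
    have prow: "\<And>i. i < k \<Longrightarrow> (\<Sum>m<n. p i m) = 1"
    proof -
      fix i assume i: "i < k"
      have "(\<Sum>m<n. p i m) = Re (xs ! i \<bullet>c xs ! i)"
        unfolding p_def by (rule parseval[OF rho EC EV' Rc[OF xs i]])
      then show "(\<Sum>m<n. p i m) = 1" using Ro[OF xs i i] by simp
    qed
    have pcol: "\<And>m. m < n \<Longrightarrow> (\<Sum>i<k. p i m) \<le> 1"
    proof -
      fix m assume m: "m < n"
      have orth: "\<And>i j. i < k \<Longrightarrow> j < k \<Longrightarrow> (\<Sum>a<n. (xs ! i) $ a * cnj ((xs ! j) $ a)) = (if i = j then 1 else 0)"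
      proof -
        fix i j assume i: "i < k" and j: "j < k"
        have "xs ! i \<bullet>c xs ! j = (\<Sum>a<n. (xs ! i) $ a * cnj ((xs ! j) $ a))"
          using Rc[OF xs j] by (simp add: scalar_prod_def atLeast0LessThan)
        then show "(\<Sum>a<n. (xs ! i) $ a * cnj ((xs ! j) $ a)) = (if i = j then 1 else 0)"
          using Ro[OF xs i j] by simp
      qed
      have "(\<Sum>i<k. p i m) \<le> (\<Sum>a<n. (cmod (E a m))^2)"
        unfolding p_def coef_def using bessel[where k=k and n=n and x="\<lambda>i a. (xs ! i) $ a" and u="\<lambda>a. E a m", OF orth] by simp
      also have "\<dots> = 1"
      proof -
        have "complex_of_real (\<Sum>a<n. (cmod (E a m))^2) = (\<Sum>a<n. cnj (E a m) * E a m)"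
          by (simp add: complex_norm_square mult.commute del: of_real_power)
        also have "\<dots> = 1" using EO m by simp
        finally show ?thesis using of_real_eq_1_iff by blast
      qed
      finally show "(\<Sum>i<k. p i m) \<le> 1" .
    qed
    note kf = kyfan_core[where k=k and n=n and w="\<lambda>i. v (Suc i)" and lam=lam and p=p, OF kn wdec vk1 lamm p0 prow pcol]
    have le: "f xs \<le> F" using kf(1) unfolding fp F_def .
    have eq: "f xs = F \<longrightarrow> (\<forall>i<k. \<rho> *\<^sub>v (xs ! i) = complex_of_real (lam i) \<cdot>\<^sub>v (xs ! i))"
    proof
      assume "f xs = F"
      then have h: "\<forall>i<k. \<forall>m<n. 0 < p i m \<longrightarrow> lam m = lam i" using kf(2) unfolding fp F_def by blast
      show "\<forall>i<k. \<rho> *\<^sub>v (xs ! i) = complex_of_real (lam i) \<cdot>\<^sub>v (xs ! i)"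
      proof (intro allI impI)
        fix i assume i: "i < k"
        show "\<rho> *\<^sub>v (xs ! i) = complex_of_real (lam i) \<cdot>\<^sub>v (xs ! i)"
          by (rule eigen_concl[OF rho EC EV' Rc[OF xs i]]) (use h i in \<open>auto simp: p_def\<close>)
      qed
    qed
    show "f xs \<le> F \<and> (f xs = F \<longrightarrow> (\<forall>i<k. \<rho> *\<^sub>v (xs ! i) = complex_of_real (lam i) \<cdot>\<^sub>v (xs ! i)))"
      using le eq by blast
  qed
  define xs0 where "xs0 = map (\<lambda>m. vec n (\<lambda>a. E a m)) [0..<k]"
  have xs0R: "xs0 \<in> R"
  proof -
    have "\<And>i j. i < k \<Longrightarrow> j < k \<Longrightarrow> xs0 ! i \<bullet>c xs0 ! j = (if i = j then 1 else 0)"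
    proof -
      fix i j assume i: "i < k" and j: "j < k"
      have "xs0 ! i \<bullet>c xs0 ! j = (\<Sum>a<n. E a i * cnj (E a j))"
        unfolding xs0_def using i j by (simp add: scalar_prod_def atLeast0LessThan)
      also have "\<dots> = cnj (\<Sum>a<n. cnj (E a i) * E a j)" by (simp add: mult.commute)
      also have "\<dots> = (if i = j then 1 else 0)" using EO i j kn by simp
      finally show "xs0 ! i \<bullet>c xs0 ! j = (if i = j then 1 else 0)" .
    qed
    moreover have "length xs0 = k" unfolding xs0_def by simp
    moreover have "set xs0 \<subseteq> carrier_vec n" unfolding xs0_def by auto
    ultimately show ?thesis unfolding R_def orthonormal_tuples_def by blast
  qed
  have xs0ev: "\<forall>i<k. \<rho> *\<^sub>v (xs0 ! i) = complex_of_real (lam i) \<cdot>\<^sub>v (xs0 ! i)"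
  proof (intro allI impI)
    fix i assume i: "i < k"
    have c: "xs0 ! i \<in> carrier_vec n" using Rc[OF xs0R i] .
    show "\<rho> *\<^sub>v (xs0 ! i) = complex_of_real (lam i) \<cdot>\<^sub>v (xs0 ! i)"
    proof (rule eq_vecI)
      fix a assume "a < dim_vec (complex_of_real (lam i) \<cdot>\<^sub>v (xs0 ! i))"
      then have a: "a < n" using c by simp
      have x0i: "xs0 ! i = vec n (\<lambda>a. E a i)" unfolding xs0_def using i by simp
      have "(\<rho> *\<^sub>v (xs0 ! i)) $ a = (\<Sum>b<n. \<rho> $$ (a,b) * (xs0 ! i) $ b)"
        by (rule mat_vec_index[OF rho c a])
      also have "\<dots> = (\<Sum>b<n. \<rho> $$ (a,b) * E b i)"
        by (rule sum.cong[OF refl]) (simp add: x0i)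
      also have "\<dots> = complex_of_real (lam i) * E a i" using EV' a i kn by simp
      finally show "(\<rho> *\<^sub>v (xs0 ! i)) $ a = (complex_of_real (lam i) \<cdot>\<^sub>v (xs0 ! i)) $ a"
        using a by (simp add: x0i)
    qed (use rho c in simp)
  qed
  have fxs0: "f xs0 = F" using fF[OF xs0R xs0ev] .
  show ?thesis
  proof (rule Set.set_eqI)
    fix xs
    show "xs \<in> qargmax (orthonormal_tuples n k) {1..k+1} (\<lambda>_ y. v y) (top_mu n k) \<rho> \<longleftrightarrow>
      xs \<in> {xs \<in> orthonormal_tuples n k. \<forall>i<k. \<rho> *\<^sub>v (xs ! i) = complex_of_real (eig_desc \<rho> (Suc i)) \<cdot>\<^sub>v (xs ! i)}"
    proof
      assume "xs \<in> qargmax (orthonormal_tuples n k) {1..k+1} (\<lambda>_ y. v y) (top_mu n k) \<rho>"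
      then have xs: "xs \<in> R" and mx: "\<forall>r'\<in>R. f r' \<le> f xs" unfolding qargmax_def R_def f_def by auto
      have "F \<le> f xs" using mx xs0R fxs0 by auto
      then have "f xs = F" using core[OF xs] by simp
      then show "xs \<in> {xs \<in> orthonormal_tuples n k. \<forall>i<k. \<rho> *\<^sub>v (xs ! i) = complex_of_real (eig_desc \<rho> (Suc i)) \<cdot>\<^sub>v (xs ! i)}"
        using core[OF xs] xs unfolding R_def lam_def by auto
    next
      assume "xs \<in> {xs \<in> orthonormal_tuples n k. \<forall>i<k. \<rho> *\<^sub>v (xs ! i) = complex_of_real (eig_desc \<rho> (Suc i)) \<cdot>\<^sub>v (xs ! i)}"
      then have xs: "xs \<in> R" and ev: "\<forall>i<k. \<rho> *\<^sub>v (xs ! i) = complex_of_real (lam i) \<cdot>\<^sub>v (xs ! i)"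
        unfolding R_def lam_def by auto
      have "f xs = F" by (rule fF[OF xs ev])
      then have "\<forall>r'\<in>R. f r' \<le> f xs" using core by auto
      then show "xs \<in> qargmax (orthonormal_tuples n k) {1..k+1} (\<lambda>_ y. v y) (top_mu n k) \<rho>"
        using xs unfolding qargmax_def R_def f_def by auto
    qed
  qed
qed

theorem mainTheorem12:
  fixes n k :: nat and v :: "nat \<Rightarrow> real"
  assumes "1 \<le> k" and "k \<le> n"
    and "\<forall>i. 1 \<le> i \<and> i < k \<longrightarrow> v (Suc i) < v i"
    and "0 < v k" and "v (Suc k) = 0"
  shows "(\<forall>\<rho> xs. density n \<rho> \<longrightarrow> xs \<in> orthonormal_tuples n k \<longrightarrow>
            qscore_exp {1..k+1} (\<lambda>_ y. v y) (top_mu n k) xs \<rho> = hs_inner (weighted_outer n k v xs) \<rho>)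
       \<and> (\<forall>\<rho>. density n \<rho> \<longrightarrow>
            qargmax (orthonormal_tuples n k) {1..k+1} (\<lambda>_ y. v y) (top_mu n k) \<rho>
              = {xs \<in> orthonormal_tuples n k. \<forall>i<k. \<rho> *\<^sub>v (xs ! i) = complex_of_real (eig_desc \<rho> (Suc i)) \<cdot>\<^sub>v (xs ! i)})
       \<and> elicits n (orthonormal_tuples n k) {1..k+1} (\<lambda>_ y. v y) (top_mu n k) (Gamma_top n k)"
proof -
  have P1: "\<forall>\<rho> xs. density n \<rho> \<longrightarrow> xs \<in> orthonormal_tuples n k \<longrightarrow>
            qscore_exp {1..k+1} (\<lambda>_ y. v y) (top_mu n k) xs \<rho> = hs_inner (weighted_outer n k v xs) \<rho>"
  proof (intro allI impI)
    fix \<rho> xs assume d: "density n \<rho>"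
    then have rho: "\<rho> \<in> carrier_mat n n" by (simp add: density_def)
    show "qscore_exp {1..k+1} (\<lambda>_ y. v y) (top_mu n k) xs \<rho> = hs_inner (weighted_outer n k v xs) \<rho>"
      using score_eq[where v=v and k=k, OF rho assms(5)] hs_weighted[OF rho] by simp
  qed
  have P2: "\<forall>\<rho>. density n \<rho> \<longrightarrow>
            qargmax (orthonormal_tuples n k) {1..k+1} (\<lambda>_ y. v y) (top_mu n k) \<rho>
              = {xs \<in> orthonormal_tuples n k. \<forall>i<k. \<rho> *\<^sub>v (xs ! i) = complex_of_real (eig_desc \<rho> (Suc i)) \<cdot>\<^sub>v (xs ! i)}"
    using argmax_char[OF assms] by blast
  have P3: "elicits n (orthonormal_tuples n k) {1..k+1} (\<lambda>_ y. v y) (top_mu n k) (Gamma_top n k)"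
    unfolding elicits_def Gamma_top_def using P2 by simp
  show ?thesis using P1 P2 P3 by blast
qed


end
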